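(* For every $n\ge0$ and $t\in(0,1)$, $$t\frac{d}{dt}\ln h_n(t)=\alpha+\beta+\gamma+2n+1-R_n(t),$$ hence for $n\ge1$, $t\frac{d\beta_n}{dt}=\beta_n(2-R_n+R_{n-1})$, and the function $H_n(t):=t(t-1)\frac{d}{dt}\ln D_n(t)$ satisfies $$H_n(t)=n(n+\alpha+\beta+\gamma)(t-1)-(t-1)\sum_{j=0}^{n-1}R_j(t).$$
   Context: Fix $\alpha,\beta,\gamma>0$ and real constants $A,B$ with $A\ge0$, $A+B\ge0$, not both $A$ and $A+B$ equal to $0$. Let $\theta$ be the Heaviside function ($\theta(x)=1$ for $x>0$, $0$ otherwise). For $t\in(0,1)$ put $w(x,t)=x^{\alpha}(1-x)^{\beta}|x-t|^{\gamma}(A+B\theta(x-t))$ on $[0,1]$. Let $P_n(x,t)$ be the monic orthogonal polynomials w.r.t. $w(\cdot,t)$ on $[0,1]$, $\int_0^1P_mP_nw\,dx=h_n(t)\delta_{mn}$, $\beta_n=h_n/h_{n-1}$. Let $D_n(t)=\det\left(\int_0^1x^{i+j}w(x,t)dx\right)_{i,j=0}^{n-1}=\prod_{j=0}^{n-1}h_j(t)$. Define $R_n(t)=\frac{\beta}{h_n}\int_0^1\frac{P_n^2(y,t)w(y,t)}{1-y}dy$. *)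

theory Defs
  imports "HOL-Analysis.Analysis" "HOL-Computational_Algebra.Polynomial"
begin

definition heaviside :: "real \<Rightarrow> real" where
  "heaviside x = (if x > 0 then 1 else 0)"

definition wt :: "real \<Rightarrow> real \<Rightarrow> real \<Rightarrow> real \<Rightarrow> real \<Rightarrow> real \<Rightarrow> real \<Rightarrow> real" where
  "wt a b g A B t x = x powr a * (1 - x) powr b * \<bar>x - t\<bar> powr g * (A + B * heaviside (x - t))"

definition OP :: "real \<Rightarrow> real \<Rightarrow> real \<Rightarrow> real \<Rightarrow> real \<Rightarrow> nat \<Rightarrow> real \<Rightarrow> real poly" where
  "OP a b g A B n t = (THE p. degree p = n \<and> lead_coeff p = 1 \<and>
      (\<forall>m<n. integral {0..1} (\<lambda>x. poly p x * x ^ m * wt a b g A B t x) = 0))"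

definition hn :: "real \<Rightarrow> real \<Rightarrow> real \<Rightarrow> real \<Rightarrow> real \<Rightarrow> nat \<Rightarrow> real \<Rightarrow> real" where
  "hn a b g A B n t = integral {0..1} (\<lambda>x. (poly (OP a b g A B n t) x)\<^sup>2 * wt a b g A B t x)"

definition betan :: "real \<Rightarrow> real \<Rightarrow> real \<Rightarrow> real \<Rightarrow> real \<Rightarrow> nat \<Rightarrow> real \<Rightarrow> real" where
  "betan a b g A B n t = hn a b g A B n t / hn a b g A B (n - 1) t"

definition moment :: "real \<Rightarrow> real \<Rightarrow> real \<Rightarrow> real \<Rightarrow> real \<Rightarrow> nat \<Rightarrow> real \<Rightarrow> real" where
  "moment a b g A B k t = integral {0..1} (\<lambda>x. x ^ k * wt a b g A B t x)"

definition Dn :: "real \<Rightarrow> real \<Rightarrow> real \<Rightarrow> real \<Rightarrow> real \<Rightarrow> nat \<Rightarrow> real \<Rightarrow> real" where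
  "Dn a b g A B n t = (\<Sum>p | p permutes {..<n}.
      of_int (sign p) * (\<Prod>i<n. moment a b g A B (i + p i) t))"

definition Rn :: "real \<Rightarrow> real \<Rightarrow> real \<Rightarrow> real \<Rightarrow> real \<Rightarrow> nat \<Rightarrow> real \<Rightarrow> real" where
  "Rn a b g A B n t = b / hn a b g A B n t *
      integral {0..1} (\<lambda>y. (poly (OP a b g A B n t) y)\<^sup>2 * wt a b g A B t y / (1 - y))"

end

theory Submission
  imports Defs "Jordan_Normal_Form.Determinant"
begin


lemma powr_mult_self: "0 \<le> (u::real) \<Longrightarrow> u powr c * u = u powr (c+1)"
  by (cases "u = 0") (auto simp: powr_add)

lemma powr_m1: "0 < (y::real) \<Longrightarrow> y powr (b-1) = y powr b / y"
  by (simp add: powr_diff)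

lemma int_sing1:
  fixes b s :: real
  assumes b: "0 < b" and s: "s \<le> 1"
  shows "(\<lambda>x. (1-x) powr (b-1)) absolutely_integrable_on {s..1}"
proof -
  have c: "continuous_on {s..1} (\<lambda>x. - ((1-x) powr b / b))"
    by (intro continuous_on_powr' continuous_intros) (use b in auto)
  have d: "((\<lambda>x. - ((1-x) powr b / b)) has_vector_derivative (1-x) powr (b-1)) (at x)"
    if "x \<in> {s<..<1}" for x
  proof -
    have D0: "((\<lambda>x. (1-x) powr b) has_real_derivative (b * (1-x) powr (b-1)) * (-1)) (at x)"
      by (rule DERIV_chain2[OF has_real_derivative_powr]) (use that in \<open>auto intro!: derivative_eq_intros\<close>)
    have "((\<lambda>x. - ((1-x) powr b / b)) has_real_derivative - ((b * (1-x) powr (b-1)) * (-1) / b)) (at x)"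
      using DERIV_minus[OF DERIV_cdivide[OF D0, of b]] by simp
    moreover have "- ((b * (1-x) powr (b-1)) * (-1) / b) = (1-x) powr (b-1)" using b by simp
    ultimately show ?thesis by (simp add: has_real_derivative_iff_has_vector_derivative)
  qed
  have "((\<lambda>x. (1-x) powr (b-1)) has_integral ((\<lambda>x. - ((1-x) powr b / b)) 1 - (\<lambda>x. - ((1-x) powr b / b)) s)) {s..1}"
    by (rule fundamental_theorem_of_calculus_interior_strong[where S="{}"]) (use s c d in auto)
  then show ?thesis
    by (intro nonnegative_absolutely_integrable_1) auto
qed

lemma int_sing2:
  fixes b s :: real and h :: "real \<Rightarrow> real"
  assumes b: "0 < b" and s: "s \<le> 1" and h: "continuous_on {s..1} h"
  shows "(\<lambda>x. h x * (1-x) powr (b-1)) integrable_on {s..1}"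
proof -
  have "(\<lambda>x. h x * (1-x) powr (b-1)) absolutely_integrable_on {s..1}"
  proof (rule absolutely_integrable_bounded_measurable_product_real)
    show "h \<in> borel_measurable (lebesgue_on {s..1})"
      by (rule continuous_imp_measurable_on_sets_lebesgue[OF h]) auto
    show "bounded (h ` {s..1})"
      by (intro compact_imp_bounded compact_continuous_image h) auto
  qed (use int_sing1[OF b s] in auto)
  then show ?thesis by (simp add: absolutely_integrable_on_def)
qed

lemma su_lt1: "0 < (s::real) \<Longrightarrow> s < 1 \<Longrightarrow> 0 \<le> u \<Longrightarrow> u \<le> 1 \<Longrightarrow> s * u < 1"
  by (smt (verit) mult_left_le)

lemma lin_le1: "(s::real) < 1 \<Longrightarrow> 0 \<le> u \<Longrightarrow> u \<le> 1 \<Longrightarrow> s + (1-s)*u \<le> 1"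
proof -
  assume "s < 1" "0 \<le> u" "u \<le> 1"
  then have "(1-s)*u \<le> 1-s" by (intro mult_left_le) auto
  then show ?thesis by simp
qed

lemma lin_ge: "(s::real) < 1 \<Longrightarrow> 0 \<le> u \<Longrightarrow> s \<le> s + (1-s)*u"
  by simp

lemma sub1:
  fixes c e g s :: real
  assumes c: "0 < c" and g: "0 < g" and s: "0 < s" "s < 1"
  shows "integral {0..s} (\<lambda>x. x powr c * (1-x) powr e * (s-x) powr g) =
         s powr (c+g+1) * integral {0..1} (\<lambda>u. u powr c * (1-s*u) powr e * (1-u) powr g)"
    and "(\<lambda>x. x powr c * (1-x) powr e * (s-x) powr g) integrable_on {0..s}"
proof -
  define f where "f = (\<lambda>x. x powr c * (1-x) powr e * (s-x) powr g)"
  have cf: "continuous_on {0..s} f"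
    unfolding f_def by (intro continuous_on_powr' continuous_intros) (use c g s in auto)
  then show "(\<lambda>x. x powr c * (1-x) powr e * (s-x) powr g) integrable_on {0..s}"
    unfolding f_def by (rule integrable_continuous_interval)
  have "((\<lambda>u. s *\<^sub>R f (s*u)) has_integral integral {s*0..s*1} f) {0..1}"
    by (rule has_integral_substitution[where c=0 and d=s])
       (use s cf in \<open>auto intro!: derivative_eq_intros\<close>)
  then have 1: "((\<lambda>u. s *\<^sub>R f (s*u)) has_integral integral {0..s} f) {0..1}" by simp
  have 2: "s *\<^sub>R f (s*u) = s powr (c+g+1) * (u powr c * (1-s*u) powr e * (1-u) powr g)"
    if "u \<in> {0..1}" for u
  proof -
    have e3: "s powr (c+g+1) = s powr c * s powr g * s" using s by (simp add: powr_add)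
    have e1: "(s*u) powr c = s powr c * u powr c" by (rule powr_mult)
    have e0: "(s*(1-u)) powr g = s powr g * (1-u) powr g" by (rule powr_mult)
    have "s*(1-u) = s - s*u" by (simp add: algebra_simps)
    with e0 have e2: "(s - s*u) powr g = s powr g * (1-u) powr g" by metis
    show ?thesis unfolding f_def real_scaleR_def e1 e2 e3 by (simp only: mult_ac)
  qed
  have "((\<lambda>u. s powr (c+g+1) * (u powr c * (1-s*u) powr e * (1-u) powr g)) has_integral integral {0..s} f) {0..1}"
    by (rule has_integral_cong[THEN iffD1, OF 2 1])
  then have "integral {0..1} (\<lambda>u. s powr (c+g+1) * (u powr c * (1-s*u) powr e * (1-u) powr g)) = integral {0..s} f" by (rule integral_unique)
  then show "integral {0..s} (\<lambda>x. x powr c * (1-x) powr e * (s-x) powr g) =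
         s powr (c+g+1) * integral {0..1} (\<lambda>u. u powr c * (1-s*u) powr e * (1-u) powr g)"
    unfolding f_def integral_mult_right by simp
qed

lemma sub2:
  fixes c e g s :: real
  assumes e: "0 < e" and g: "0 < g" and s: "0 < s" "s < 1"
  shows "integral {s..1} (\<lambda>x. x powr c * (1-x) powr e * (x-s) powr g) =
         (1-s) powr (e+g+1) * integral {0..1} (\<lambda>u. (s+(1-s)*u) powr c * (1-u) powr e * u powr g)"
    and "(\<lambda>x. x powr c * (1-x) powr e * (x-s) powr g) integrable_on {s..1}"
proof -
  define f where "f = (\<lambda>x. x powr c * (1-x) powr e * (x-s) powr g)"
  have cf: "continuous_on {s..1} f"
    unfolding f_def by (intro continuous_on_powr' continuous_intros) (use e g s in auto)
  then show "(\<lambda>x. x powr c * (1-x) powr e * (x-s) powr g) integrable_on {s..1}"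
    unfolding f_def by (rule integrable_continuous_interval)
  have "((\<lambda>u. (1-s) *\<^sub>R f (s+(1-s)*u)) has_integral integral {s+(1-s)*0..s+(1-s)*1} f) {0..1}"
    by (rule has_integral_substitution[where c=s and d=1])
       (use s cf in \<open>auto intro!: derivative_eq_intros intro: lin_le1\<close>)
  then have 1: "((\<lambda>u. (1-s) *\<^sub>R f (s+(1-s)*u)) has_integral integral {s..1} f) {0..1}" by simp
  have 2: "(1-s) *\<^sub>R f (s+(1-s)*u) = (1-s) powr (e+g+1) * ((s+(1-s)*u) powr c * (1-u) powr e * u powr g)"
    if "u \<in> {0..1}" for u
  proof -
    have e3: "(1-s) powr (e+g+1) = (1-s) powr e * (1-s) powr g * (1-s)" using s by (simp add: powr_add)
    have e0: "((1-s)*(1-u)) powr e = (1-s) powr e * (1-u) powr e" by (rule powr_mult)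
    have "(1-s)*(1-u) = 1 - (s+(1-s)*u)" by (simp add: algebra_simps)
    with e0 have e1: "(1 - (s+(1-s)*u)) powr e = (1-s) powr e * (1-u) powr e" by metis
    have e4: "((1-s)*u) powr g = (1-s) powr g * u powr g" by (rule powr_mult)
    have "(1-s)*u = (s+(1-s)*u) - s" by (simp add: algebra_simps)
    with e4 have e2: "((s+(1-s)*u) - s) powr g = (1-s) powr g * u powr g" by metis
    show ?thesis unfolding f_def real_scaleR_def e1 e2 e3 by (simp only: mult_ac)
  qed
  have "((\<lambda>u. (1-s) powr (e+g+1) * ((s+(1-s)*u) powr c * (1-u) powr e * u powr g)) has_integral integral {s..1} f) {0..1}"
    by (rule has_integral_cong[THEN iffD1, OF 2 1])
  then have "integral {0..1} (\<lambda>u. (1-s) powr (e+g+1) * ((s+(1-s)*u) powr c * (1-u) powr e * u powr g)) = integral {s..1} f" by (rule integral_unique)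
  then show "integral {s..1} (\<lambda>x. x powr c * (1-x) powr e * (x-s) powr g) =
         (1-s) powr (e+g+1) * integral {0..1} (\<lambda>u. (s+(1-s)*u) powr c * (1-u) powr e * u powr g)"
    unfolding f_def integral_mult_right by simp
qed

lemma prod_U_facts:
  assumes "p \<in> {0<..<(1::real)} \<times> {0..(1::real)}"
  shows "fst p * snd p < 1" "0 < fst p + (1 - fst p) * snd p" "0 \<le> snd p" "snd p \<le> 1"
    "0 < fst p" "fst p < 1"
proof -
  obtain s u where p: "p = (s,u)" by force
  with assms have su: "0 < s" "s < 1" "0 \<le> u" "u \<le> 1" by auto
  show "fst p * snd p < 1" using su_lt1[OF su] p by simp
  have "0 \<le> (1-s)*u" using su by simp
  then show "0 < fst p + (1 - fst p) * snd p" unfolding p fst_conv snd_conv using su by linarith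
qed (use assms in auto)

lemma derJ:
  fixes c e g s0 :: real
  assumes c: "0 < c" and g: "0 < g" and s0: "0 < s0" "s0 < 1"
  shows "((\<lambda>s. integral {0..1} (\<lambda>u. u powr c * (1-s*u) powr e * (1-u) powr g)) has_real_derivative
        - e * integral {0..1} (\<lambda>u. u powr (c+1) * (1-s0*u) powr (e-1) * (1-u) powr g)) (at s0)"
proof -
  define F where "F = (\<lambda>s u. u powr c * (1-s*u) powr e * (1-u) powr g)"
  define Fx where "Fx = (\<lambda>s u. - e * (u powr (c+1) * (1-s*u) powr (e-1) * (1-u) powr g))"
  have "((\<lambda>s. integral (cbox 0 1) (F s)) has_field_derivative integral (cbox 0 1) (Fx s0)) (at s0 within {0<..<1})"
  proof (rule leibniz_rule_field_derivative)
    fix s u :: real assume s: "s \<in> {0<..<1}" and u: "u \<in> cbox 0 1"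
    then have su: "s*u < 1" using su_lt1[of s u] by auto
    have D0: "((\<lambda>s. (1-s*u) powr e) has_real_derivative (e * (1-s*u) powr (e-1)) * (-u)) (at s)"
      by (rule DERIV_chain2[OF has_real_derivative_powr]) (use su in \<open>auto intro!: derivative_eq_intros\<close>)
    have "((\<lambda>s. u powr c * (1-s*u) powr e * (1-u) powr g) has_real_derivative
           u powr c * ((e * (1-s*u) powr (e-1)) * (-u)) * (1-u) powr g) (at s)"
      using DERIV_cmult_right[OF DERIV_cmult[OF D0, of "u powr c"], of "(1-u) powr g"] by simp
    moreover have "u powr c * ((e * (1-s*u) powr (e-1)) * (-u)) * (1-u) powr g = Fx s u"
      unfolding Fx_def using powr_mult_self[of u c] u by (simp add: mult_ac)
    ultimately show "((\<lambda>s. F s u) has_field_derivative Fx s u) (at s within {0<..<1})"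
      unfolding F_def by (simp add: has_field_derivative_at_within)
  next
    fix s :: real assume s: "s \<in> {0<..<1}"
    have sx: "\<forall>x\<in>{0..1}. 0 < 1 - s*x" using su_lt1[of s] s by auto
    have "continuous_on {0..1} (F s)"
      unfolding F_def by (intro continuous_on_powr' continuous_intros; use s c g sx in force)
    then show "F s integrable_on cbox 0 1" by (simp add: integrable_continuous_interval)
  next
    have PU: "\<forall>p::real\<times>real\<in>{0<..<1}\<times>{0..1}. fst p * snd p < 1 \<and> 0 < fst p + (1 - fst p) * snd p"
      using prod_U_facts by blast
    show "continuous_on ({0<..<1} \<times> cbox 0 1) (\<lambda>(s, u). Fx s u)"
      unfolding Fx_def case_prod_unfold
      by (intro continuous_on_powr' continuous_intros; use c g PU in force)
  qed (use s0 in auto)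
  then have "((\<lambda>s. integral {0..1} (F s)) has_field_derivative integral {0..1} (Fx s0)) (at s0)"
    using at_within_open[of s0 "{0<..<1}"] s0 by simp
  then show ?thesis unfolding F_def Fx_def by simp
qed

lemma derK:
  fixes c e g s0 :: real
  assumes e: "0 < e" and g: "0 < g" and s0: "0 < s0" "s0 < 1"
  shows "((\<lambda>s. integral {0..1} (\<lambda>u. (s+(1-s)*u) powr c * (1-u) powr e * u powr g)) has_real_derivative
        c * integral {0..1} (\<lambda>u. (s0+(1-s0)*u) powr (c-1) * (1-u) powr (e+1) * u powr g)) (at s0)"
proof -
  define F where "F = (\<lambda>s u. (s+(1-s)*u) powr c * (1-u) powr e * u powr g)"
  define Fx where "Fx = (\<lambda>s u. c * ((s+(1-s)*u) powr (c-1) * (1-u) powr (e+1) * u powr g))"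
  have "((\<lambda>s. integral (cbox 0 1) (F s)) has_field_derivative integral (cbox 0 1) (Fx s0)) (at s0 within {0<..<1})"
  proof (rule leibniz_rule_field_derivative)
    fix s u :: real assume s: "s \<in> {0<..<1}" and u: "u \<in> cbox 0 1"
    then have su: "0 < s+(1-s)*u" using prod_U_facts(2)[of "(s,u)"] by auto
    have D0: "((\<lambda>s. (s+(1-s)*u) powr c) has_real_derivative (c * (s+(1-s)*u) powr (c-1)) * (1-u)) (at s)"
      by (rule DERIV_chain2[OF has_real_derivative_powr]) (use su in \<open>auto intro!: derivative_eq_intros\<close>)
    have "((\<lambda>s. (s+(1-s)*u) powr c * (1-u) powr e * u powr g) has_real_derivative
           (c * (s+(1-s)*u) powr (c-1)) * (1-u) * (1-u) powr e * u powr g) (at s)"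
      using DERIV_cmult_right[OF DERIV_cmult_right[OF D0, of "(1-u) powr e"], of "u powr g"] by simp
    moreover have "(c * (s+(1-s)*u) powr (c-1)) * (1-u) * (1-u) powr e * u powr g = Fx s u"
      unfolding Fx_def using powr_mult_self[of "1-u" e] u by (simp add: mult_ac)
    ultimately show "((\<lambda>s. F s u) has_field_derivative Fx s u) (at s within {0<..<1})"
      unfolding F_def by (simp add: has_field_derivative_at_within)
  next
    fix s :: real assume s: "s \<in> {0<..<1}"
    have sx: "\<forall>x\<in>{0..1}. 0 < s+(1-s)*x" using prod_U_facts(2)[of "(s,_)"] s by auto
    have "continuous_on {0..1} (F s)"
      unfolding F_def by (intro continuous_on_powr' continuous_intros; use s e g sx in force)
    then show "F s integrable_on cbox 0 1" by (simp add: integrable_continuous_interval)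
  next
    have PU: "\<forall>p::real\<times>real\<in>{0<..<1}\<times>{0..1}. fst p * snd p < 1 \<and> 0 < fst p + (1 - fst p) * snd p"
      using prod_U_facts by blast
    show "continuous_on ({0<..<1} \<times> cbox 0 1) (\<lambda>(s, u). Fx s u)"
      unfolding Fx_def case_prod_unfold
      by (intro continuous_on_powr' continuous_intros; use e g PU in force)
  qed (use s0 in auto)
  then have "((\<lambda>s. integral {0..1} (F s)) has_field_derivative integral {0..1} (Fx s0)) (at s0)"
    using at_within_open[of s0 "{0<..<1}"] s0 by simp
  then show ?thesis unfolding F_def Fx_def by simp
qed

lemma I1_der:
  fixes c b g s0 :: real
  assumes c: "0 < c" and b: "0 < b" and g: "0 < g" and s0: "0 < s0" "s0 < 1"
  shows "((\<lambda>s. integral {0..s} (\<lambda>x. x powr c * (1-x) powr b * (s-x) powr g)) has_real_derivative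
     ((c+b+g+1) * integral {0..s0} (\<lambda>x. x powr c * (1-x) powr b * (s0-x) powr g)
      - b * integral {0..s0} (\<lambda>x. x powr c * (1-x) powr (b-1) * (s0-x) powr g)) / s0) (at s0)"
proof -
  define J where "J = (\<lambda>s. integral {0..1} (\<lambda>u. u powr c * (1-s*u) powr b * (1-u) powr g))"
  define J2 where "J2 = integral {0..1} (\<lambda>u. u powr (c+1) * (1-s0*u) powr (b-1) * (1-u) powr g)"
  define I1 where "I1 = integral {0..s0} (\<lambda>x. x powr c * (1-x) powr b * (s0-x) powr g)"
  define N1 where "N1 = integral {0..s0} (\<lambda>x. x powr c * (1-x) powr (b-1) * (s0-x) powr g)"
  define p where "p = c+g+1"
  have D: "((\<lambda>s. s powr p * J s) has_real_derivative
      (p * s0 powr (p-1)) * J s0 + (- b * J2) * s0 powr p) (at s0)"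
    unfolding J_def J2_def
    by (rule DERIV_mult[OF has_real_derivative_powr derJ]) (use s0 c g in auto)
  have D2: "((\<lambda>s. integral {0..s} (\<lambda>x. x powr c * (1-x) powr b * (s-x) powr g)) has_real_derivative
      (p * s0 powr (p-1)) * J s0 + (- b * J2) * s0 powr p) (at s0)"
    by (rule has_field_derivative_transform_within_open[OF D, of "{0<..<1}"])
       (use s0 c g sub1(1) in \<open>auto simp: J_def p_def\<close>)
  have e1: "I1 = s0 powr p * J s0" unfolding I1_def J_def p_def using sub1(1)[OF c g s0] .
  have e2: "integral {0..s0} (\<lambda>x. x powr (c+1) * (1-x) powr (b-1) * (s0-x) powr g) = s0 powr (p+1) * J2"
    unfolding J2_def p_def using sub1(1)[of "c+1" g s0 "b-1"] c g s0 by (simp add: add_ac)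
  have i1: "(\<lambda>x. x powr c * (1-x) powr (b-1) * (s0-x) powr g) integrable_on {0..s0}"
    using sub1(2)[OF c g s0] .
  have i2: "(\<lambda>x. x powr c * (1-x) powr b * (s0-x) powr g) integrable_on {0..s0}"
    using sub1(2)[OF c g s0] .
  have "integral {0..s0} (\<lambda>x. x powr (c+1) * (1-x) powr (b-1) * (s0-x) powr g) =
        integral {0..s0} (\<lambda>x. x powr c * (1-x) powr (b-1) * (s0-x) powr g - x powr c * (1-x) powr b * (s0-x) powr g)"
  proof (rule integral_cong)
    fix x assume x: "x \<in> {0..s0}"
    then have "x \<le> 1" "0 \<le> x" using s0 by auto
    then have A: "x powr (c+1) = x powr c * x" and B: "(1-x) powr b = (1-x) powr (b-1) * (1-x)"
      using powr_mult_self[of x c] powr_mult_self[of "1-x" "b-1"] by auto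
    show "x powr (c+1) * (1-x) powr (b-1) * (s0-x) powr g =
      x powr c * (1-x) powr (b-1) * (s0-x) powr g - x powr c * (1-x) powr b * (s0-x) powr g"
      unfolding A B by (simp add: algebra_simps)
  qed
  also have "\<dots> = N1 - I1" unfolding N1_def I1_def by (rule integral_diff[OF i1 i2])
  finally have e3: "s0 powr (p+1) * J2 = N1 - I1" using e2 by simp
  have e4: "s0 * s0 powr (p-1) = s0 powr p" "s0 powr (p+1) = s0 powr p * s0"
    using powr_mult_self[of s0 "p-1"] s0 by (auto simp: powr_add mult.commute)
  have "s0 * ((p * s0 powr (p-1)) * J s0 + (- b * J2) * s0 powr p) = (c+b+g+1) * I1 - b * N1"
  proof -
    have "s0 * ((p * s0 powr (p-1)) * J s0 + (- b * J2) * s0 powr p)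
        = p * (s0 * s0 powr (p-1)) * J s0 - b * (s0 powr p * s0 * J2)" by (simp add: algebra_simps)
    also have "\<dots> = p * I1 - b * (N1 - I1)" using e1 e3 e4 by (simp add: mult.assoc)
    finally show ?thesis unfolding p_def by (simp add: algebra_simps)
  qed
  then have "(p * s0 powr (p-1)) * J s0 + (- b * J2) * s0 powr p = ((c+b+g+1) * I1 - b * N1) / s0"
    using s0 by (simp add: field_simps)
  then show ?thesis using D2 unfolding I1_def N1_def by simp
qed

lemma ibp2:
  fixes c b g s :: real
  assumes b: "0 < b" and g: "0 < g" and s: "0 < s" "s < 1"
  shows "c * s * integral {s..1} (\<lambda>x. x powr (c-1) * (1-x) powr b * (x-s) powr g) =
     (c+b+g+1) * integral {s..1} (\<lambda>x. x powr c * (1-x) powr b * (x-s) powr g)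
     - b * (1-s) * integral {s..1} (\<lambda>x. x powr c * (1-x) powr (b-1) * (x-s) powr g)"
proof -
  define F where "F = (\<lambda>x. x powr c * (1-x) powr b * (x-s) powr g)"
  define P where "P = (\<lambda>x. x powr (c-1) * (1-x) powr b * (x-s) powr g)"
  define N where "N = (\<lambda>x. x powr c * (1-x) powr (b-1) * (x-s) powr g)"
  define \<Phi> where "\<Phi> = (\<lambda>x. x powr c * (1-x) powr b * (x-s) powr (g+1))"
  define combo where "combo = (\<lambda>x. c * (F x - s * P x) - b * ((1-s) * N x - F x) + (g+1) * F x)"
  have iF: "F integrable_on {s..1}" unfolding F_def
    by (intro integrable_continuous_interval continuous_on_powr' continuous_intros; use s b g in force)
  have iP: "P integrable_on {s..1}" unfolding P_def
    by (intro integrable_continuous_interval continuous_on_powr' continuous_intros; use s b g in force)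
  have iN: "N integrable_on {s..1}"
  proof -
    have "(\<lambda>x. (x powr c * (x-s) powr g) * (1-x) powr (b-1)) integrable_on {s..1}"
      by (intro int_sing2 b continuous_on_powr' continuous_intros; use s g in force)
    then show ?thesis unfolding N_def by (simp add: mult_ac)
  qed
  have hc: "(combo has_integral (c * (integral {s..1} F - s * integral {s..1} P)
      - b * ((1-s) * integral {s..1} N - integral {s..1} F) + (g+1) * integral {s..1} F)) {s..1}"
    unfolding combo_def
    by (intro has_integral_add has_integral_diff has_integral_mult_right
          integrable_integral iF iP iN)
  have cphi: "continuous_on {s..1} \<Phi>" unfolding \<Phi>_def
    by (intro continuous_on_powr' continuous_intros; use s b g in force)
  have dphi: "(\<Phi> has_vector_derivative combo x) (at x)" if x: "x \<in> {s<..<1}" for x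
  proof -
    have x0: "0 < x" "0 < 1-x" "0 < x-s" using x s by auto
    have d1: "((\<lambda>x. x powr c) has_real_derivative c * x powr (c-1)) (at x)"
      by (rule has_real_derivative_powr) (use x0 in auto)
    have d2: "((\<lambda>x. (1-x) powr b) has_real_derivative (b * (1-x) powr (b-1)) * (-1)) (at x)"
      by (rule DERIV_chain2[OF has_real_derivative_powr]) (use x0 in \<open>auto intro!: derivative_eq_intros\<close>)
    have d3: "((\<lambda>x. (x-s) powr (g+1)) has_real_derivative ((g+1) * (x-s) powr (g+1-1)) * 1) (at x)"
      by (rule DERIV_chain2[OF has_real_derivative_powr]) (use x0 in \<open>auto intro!: derivative_eq_intros\<close>)
    have d: "(\<Phi> has_real_derivative
      ((c * x powr (c-1)) * (1-x) powr b + ((b * (1-x) powr (b-1)) * (-1)) * x powr c) * (x-s) powr (g+1)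
      + (((g+1) * (x-s) powr (g+1-1)) * 1) * (x powr c * (1-x) powr b)) (at x)"
      unfolding \<Phi>_def by (intro DERIV_mult d1 d2 d3)
    have A: "x powr c = x powr (c-1) * x" using powr_mult_self[of x "c-1"] x0 by simp
    have B: "(1-x) powr b = (1-x) powr (b-1) * (1-x)" using powr_mult_self[of "1-x" "b-1"] x0 by simp
    have C: "(x-s) powr (g+1) = (x-s) powr g * (x-s)" using powr_mult_self[of "x-s" g] x0 by simp
    have "((c * x powr (c-1)) * (1-x) powr b + ((b * (1-x) powr (b-1)) * (-1)) * x powr c) * (x-s) powr (g+1)
      + (((g+1) * (x-s) powr (g+1-1)) * 1) * (x powr c * (1-x) powr b) = combo x"
      unfolding combo_def F_def P_def N_def A B C by (simp add: algebra_simps)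
    with d show ?thesis by (simp add: has_real_derivative_iff_has_vector_derivative)
  qed
  have "(combo has_integral (\<Phi> 1 - \<Phi> s)) {s..1}"
    by (rule fundamental_theorem_of_calculus_interior_strong[where S="{}"]) (use s cphi dphi in auto)
  moreover have "\<Phi> 1 - \<Phi> s = 0" unfolding \<Phi>_def using g b by simp
  ultimately have "c * (integral {s..1} F - s * integral {s..1} P)
      - b * ((1-s) * integral {s..1} N - integral {s..1} F) + (g+1) * integral {s..1} F = 0"
    using hc has_integral_unique by metis
  then show ?thesis unfolding F_def[symmetric] P_def[symmetric] N_def[symmetric]
    by (simp add: algebra_simps)
qed

lemma I2_der:
  fixes c b g s0 :: real
  assumes b: "0 < b" and g: "0 < g" and s0: "0 < s0" "s0 < 1"
  shows "((\<lambda>s. integral {s..1} (\<lambda>x. x powr c * (1-x) powr b * (x-s) powr g)) has_real_derivative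
     ((c+b+g+1) * integral {s0..1} (\<lambda>x. x powr c * (1-x) powr b * (x-s0) powr g)
      - b * integral {s0..1} (\<lambda>x. x powr c * (1-x) powr (b-1) * (x-s0) powr g)) / s0) (at s0)"
proof -
  define K where "K = (\<lambda>s. integral {0..1} (\<lambda>u. (s+(1-s)*u) powr c * (1-u) powr b * u powr g))"
  define K2 where "K2 = integral {0..1} (\<lambda>u. (s0+(1-s0)*u) powr (c-1) * (1-u) powr (b+1) * u powr g)"
  define I2 where "I2 = integral {s0..1} (\<lambda>x. x powr c * (1-x) powr b * (x-s0) powr g)"
  define N2 where "N2 = integral {s0..1} (\<lambda>x. x powr c * (1-x) powr (b-1) * (x-s0) powr g)"
  define P where "P = integral {s0..1} (\<lambda>x. x powr (c-1) * (1-x) powr b * (x-s0) powr g)"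
  define q where "q = b+g+1"
  have Dq: "((\<lambda>s. (1-s) powr q) has_real_derivative (q * (1-s0) powr (q-1)) * (-1)) (at s0)"
    by (rule DERIV_chain2[OF has_real_derivative_powr]) (use s0 in \<open>auto intro!: derivative_eq_intros\<close>)
  have D: "((\<lambda>s. (1-s) powr q * K s) has_real_derivative
      ((q * (1-s0) powr (q-1)) * (-1)) * K s0 + (c * K2) * (1-s0) powr q) (at s0)"
    unfolding K_def K2_def
    by (rule DERIV_mult[OF Dq derK]) (use s0 b g in auto)
  have D2: "((\<lambda>s. integral {s..1} (\<lambda>x. x powr c * (1-x) powr b * (x-s) powr g)) has_real_derivative
      ((q * (1-s0) powr (q-1)) * (-1)) * K s0 + (c * K2) * (1-s0) powr q) (at s0)"
    by (rule has_field_derivative_transform_within_open[OF D, of "{0<..<1}"])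
       (use s0 b g sub2(1) in \<open>auto simp: K_def q_def\<close>)
  have e1: "I2 = (1-s0) powr q * K s0" unfolding I2_def K_def q_def using sub2(1)[OF b g s0] .
  have b1: "0 < b+1" using b by simp
  have e2: "integral {s0..1} (\<lambda>x. x powr (c-1) * (1-x) powr (b+1) * (x-s0) powr g) = (1-s0) powr (q+1) * K2"
    unfolding K2_def q_def using sub2(1)[OF b1 g s0, of "c-1"] by (simp add: add_ac)
  have i1: "(\<lambda>x. x powr (c-1) * (1-x) powr b * (x-s0) powr g) integrable_on {s0..1}"
    using sub2(2)[OF b g s0] .
  have i2: "(\<lambda>x. x powr c * (1-x) powr b * (x-s0) powr g) integrable_on {s0..1}"
    using sub2(2)[OF b g s0] .
  have "integral {s0..1} (\<lambda>x. x powr (c-1) * (1-x) powr (b+1) * (x-s0) powr g) =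
        integral {s0..1} (\<lambda>x. x powr (c-1) * (1-x) powr b * (x-s0) powr g - x powr c * (1-x) powr b * (x-s0) powr g)"
  proof (rule integral_cong)
    fix x assume x: "x \<in> {s0..1}"
    then have "x \<le> 1" "0 < x" using s0 by auto
    then have A: "x powr c = x powr (c-1) * x" and B: "(1-x) powr (b+1) = (1-x) powr b * (1-x)"
      using powr_mult_self[of x "c-1"] powr_mult_self[of "1-x" "b"] by auto
    show "x powr (c-1) * (1-x) powr (b+1) * (x-s0) powr g =
      x powr (c-1) * (1-x) powr b * (x-s0) powr g - x powr c * (1-x) powr b * (x-s0) powr g"
      unfolding A B by (simp add: algebra_simps)
  qed
  also have "\<dots> = P - I2" unfolding P_def I2_def by (rule integral_diff[OF i1 i2])
  finally have e3: "(1-s0) powr (q+1) * K2 = P - I2" using e2 by simp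
  have e4: "(1-s0) * (1-s0) powr (q-1) = (1-s0) powr q" "(1-s0) powr (q+1) = (1-s0) powr q * (1-s0)"
    using powr_mult_self[of "1-s0" "q-1"] s0 by (auto simp: powr_add mult.commute)
  have ib: "c * s0 * P = (c+b+g+1) * I2 - b * (1-s0) * N2"
    unfolding P_def I2_def N2_def by (rule ibp2[OF b g s0])
  define Dv where "Dv = ((q * (1-s0) powr (q-1)) * (-1)) * K s0 + (c * K2) * (1-s0) powr q"
  have "(1-s0) * Dv = - q * I2 + c * (P - I2)"
  proof -
    have "(1-s0) * Dv = - q * ((1-s0) * (1-s0) powr (q-1)) * K s0 + c * ((1-s0) powr q * (1-s0) * K2)"
      unfolding Dv_def by (simp add: algebra_simps)
    also have "\<dots> = - q * I2 + c * (P - I2)" using e1 e3 e4 by (simp add: mult.assoc)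
    finally show ?thesis .
  qed
  then have "s0 * ((1-s0) * Dv) = s0 * (- q * I2 + c * (P - I2))" by simp
  also have "\<dots> = - q * s0 * I2 + c * s0 * P - c * s0 * I2"
    by (simp add: algebra_simps)
  also have "\<dots> = - q * s0 * I2 + ((c+b+g+1) * I2 - b * (1-s0) * N2) - c * s0 * I2"
    by (simp only: ib)
  also have "\<dots> = (1-s0) * ((c+b+g+1) * I2 - b * N2)"
    unfolding q_def by (simp add: algebra_simps)
  finally have "s0 * ((1-s0) * Dv) = (1-s0) * ((c+b+g+1) * I2 - b * N2)" .
  then have "(1-s0) * (s0 * Dv) = (1-s0) * ((c+b+g+1) * I2 - b * N2)" by (simp add: mult_ac)
  then have "s0 * Dv = (c+b+g+1) * I2 - b * N2" using s0 by simp
  then have "Dv = ((c+b+g+1) * I2 - b * N2) / s0"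
    using s0 by (simp add: field_simps)
  then show ?thesis using D2 unfolding I2_def N2_def Dv_def by simp
qed

lemma int_cmult: "f integrable_on S \<Longrightarrow> (\<lambda>x. (c::real) * f x) integrable_on S"
  using integrable_on_cmult_left[of f S c] by simp

lemma xk_powr: "0 \<le> (x::real) \<Longrightarrow> 0 < a \<Longrightarrow> x^k * x powr a = x powr (real k + a)"
  by (cases "x = 0") (auto simp: powr_add powr_realpow)

lemma split_int:
  fixes f :: "real \<Rightarrow> real"
  assumes "0 \<le> s" "s \<le> 1" "f integrable_on {0..s}" "f integrable_on {s..1}"
  shows "f integrable_on {0..1}" "integral {0..1} f = integral {0..s} f + integral {s..1} f"
proof -
  show i: "f integrable_on {0..1}" by (rule Henstock_Kurzweil_Integration.integrable_combine[OF assms])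
  show "integral {0..1} f = integral {0..s} f + integral {s..1} f"
    using Henstock_Kurzweil_Integration.integral_combine[OF assms(1,2) i] by simp
qed

lemma wt_left:
  assumes "0 \<le> x" "x \<le> s" "0 < a"
  shows "x^k * wt a b g A B s x = A * (x powr (real k + a) * (1-x) powr b * (s-x) powr g)"
proof -
  have "heaviside (x - s) = 0" "\<bar>x - s\<bar> = s - x" using assms by (auto simp: heaviside_def)
  then show ?thesis unfolding wt_def using xk_powr[of x a k] assms
    by (simp add: mult_ac)
qed

lemma wt_right:
  assumes "s \<le> x" "0 < s" "0 < a" "0 < g"
  shows "x^k * wt a b g A B s x = (A+B) * (x powr (real k + a) * (1-x) powr b * (x-s) powr g)"
proof (cases "x = s")
  case True then show ?thesis unfolding wt_def using assms by simp
next
  case False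
  then have "heaviside (x - s) = 1" "\<bar>x - s\<bar> = x - s" using assms by (auto simp: heaviside_def)
  then show ?thesis unfolding wt_def using xk_powr[of x a k] assms
    by (simp add: mult_ac)
qed

lemma div1m: "(x::real) \<le> 1 \<Longrightarrow> (1-x) powr (b::real) / (1-x) = (1-x) powr (b - 1)"
  by (cases "x = 1") (auto simp: powr_m1)

lemma moment_facts:
  fixes a b g A B s :: real and k :: nat
  assumes a: "0 < a" and b: "0 < b" and g: "0 < g" and s: "0 < s" "s < 1"
  defines "c \<equiv> real k + a"
  shows "(\<lambda>x. x^k * wt a b g A B s x) integrable_on {0..1}"
    "moment a b g A B k s = A * integral {0..s} (\<lambda>x. x powr c * (1-x) powr b * (s-x) powr g)
         + (A+B) * integral {s..1} (\<lambda>x. x powr c * (1-x) powr b * (x-s) powr g)"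
    "(\<lambda>x. x^k * wt a b g A B s x / (1-x)) integrable_on {0..1}"
    "integral {0..1} (\<lambda>x. x^k * wt a b g A B s x / (1-x)) =
         A * integral {0..s} (\<lambda>x. x powr c * (1-x) powr (b-1) * (s-x) powr g)
         + (A+B) * integral {s..1} (\<lambda>x. x powr c * (1-x) powr (b-1) * (x-s) powr g)"
proof -
  have c: "0 < c" unfolding c_def using a by simp
  let ?f = "\<lambda>x. x^k * wt a b g A B s x"
  let ?h = "\<lambda>x. x^k * wt a b g A B s x / (1-x)"
  have L: "integral {0..s} ?f = A * integral {0..s} (\<lambda>x. x powr c * (1-x) powr b * (s-x) powr g)
       \<and> ?f integrable_on {0..s}"
  proof -
    have e: "\<And>x. x \<in> {0..s} \<Longrightarrow> ?f x = A * (x powr c * (1-x) powr b * (s-x) powr g)"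
      unfolding c_def using wt_left a by auto
    have i: "(\<lambda>x. A * (x powr c * (1-x) powr b * (s-x) powr g)) integrable_on {0..s}" (is "?G integrable_on ?S")
      by (intro int_cmult sub1(2) c g s)
    have i2: "?f integrable_on ?S" by (rule integrable_eq[OF i]) (use e in auto)
    have "integral ?S ?f = integral ?S ?G" by (rule integral_cong) (use e in auto)
    then show ?thesis using i2 by simp
  qed
  have R: "integral {s..1} ?f = (A+B) * integral {s..1} (\<lambda>x. x powr c * (1-x) powr b * (x-s) powr g)
       \<and> ?f integrable_on {s..1}"
  proof -
    have e: "\<And>x. x \<in> {s..1} \<Longrightarrow> ?f x = (A+B) * (x powr c * (1-x) powr b * (x-s) powr g)"
      unfolding c_def using wt_right a g s by auto
    have i: "(\<lambda>x. (A+B) * (x powr c * (1-x) powr b * (x-s) powr g)) integrable_on {s..1}" (is "?G integrable_on ?S")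
      by (intro int_cmult sub2(2) b g s)
    have i2: "?f integrable_on ?S" by (rule integrable_eq[OF i]) (use e in auto)
    have "integral ?S ?f = integral ?S ?G" by (rule integral_cong) (use e in auto)
    then show ?thesis using i2 by simp
  qed
  show "?f integrable_on {0..1}" using split_int(1)[of s ?f] L R s by auto
  show "moment a b g A B k s = A * integral {0..s} (\<lambda>x. x powr c * (1-x) powr b * (s-x) powr g)
         + (A+B) * integral {s..1} (\<lambda>x. x powr c * (1-x) powr b * (x-s) powr g)"
    unfolding moment_def using split_int(2)[of s ?f] L R s by auto
  have L2: "integral {0..s} ?h = A * integral {0..s} (\<lambda>x. x powr c * (1-x) powr (b-1) * (s-x) powr g)
       \<and> ?h integrable_on {0..s}"
  proof -
    have e: "\<And>x. x \<in> {0..s} \<Longrightarrow> ?h x = A * (x powr c * (1-x) powr (b-1) * (s-x) powr g)"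
    proof -
      fix x assume x: "x \<in> {0..s}"
      then have "?h x = A * (x powr c * (1-x) powr b * (s-x) powr g) / (1-x)"
        unfolding c_def using wt_left[of x s a k b g A B] a by auto
      also have "\<dots> = A * (x powr c * ((1-x) powr b / (1-x)) * (s-x) powr g)"
        by (simp add: mult_ac)
      finally have hx: "?h x = A * (x powr c * ((1-x) powr b / (1-x)) * (s-x) powr g)" .
      have d: "(1-x) powr b / (1-x) = (1-x) powr (b-1)" using div1m[of x b] x s by auto
      show "?h x = A * (x powr c * (1-x) powr (b-1) * (s-x) powr g)"
        using hx unfolding d .
    qed
    have i: "(\<lambda>x. A * (x powr c * (1-x) powr (b-1) * (s-x) powr g)) integrable_on {0..s}" (is "?G integrable_on ?S")
      by (intro int_cmult sub1(2) c g s)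
    have i2: "?h integrable_on ?S" by (rule integrable_eq[OF i]) (use e in auto)
    have "integral ?S ?h = integral ?S ?G" by (rule integral_cong) (use e in auto)
    then show ?thesis using i2 by simp
  qed
  have R2: "integral {s..1} ?h = (A+B) * integral {s..1} (\<lambda>x. x powr c * (1-x) powr (b-1) * (x-s) powr g)
       \<and> ?h integrable_on {s..1}"
  proof -
    have e: "\<And>x. x \<in> {s..1} \<Longrightarrow> ?h x = (A+B) * (x powr c * (1-x) powr (b-1) * (x-s) powr g)"
    proof -
      fix x assume x: "x \<in> {s..1}"
      then have "?h x = (A+B) * (x powr c * (1-x) powr b * (x-s) powr g) / (1-x)"
        unfolding c_def using wt_right[of s x a g k b A B] a g s by auto
      also have "\<dots> = (A+B) * (x powr c * ((1-x) powr b / (1-x)) * (x-s) powr g)"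
        by (simp add: mult_ac)
      finally have hx: "?h x = (A+B) * (x powr c * ((1-x) powr b / (1-x)) * (x-s) powr g)" .
      have d: "(1-x) powr b / (1-x) = (1-x) powr (b-1)" using div1m[of x b] x s by auto
      show "?h x = (A+B) * (x powr c * (1-x) powr (b-1) * (x-s) powr g)"
        using hx unfolding d .
    qed
    have "(\<lambda>x. (x powr c * (x-s) powr g) * (1-x) powr (b-1)) integrable_on {s..1}"
      by (intro int_sing2 b continuous_on_powr' continuous_intros; use s g in force)
    then have i: "(\<lambda>x. (A+B) * (x powr c * (1-x) powr (b-1) * (x-s) powr g)) integrable_on {s..1}" (is "?G integrable_on ?S")
      by (intro int_cmult) (simp add: mult_ac)
    have i2: "?h integrable_on ?S" by (rule integrable_eq[OF i]) (use e in auto)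
    have "integral ?S ?h = integral ?S ?G" by (rule integral_cong) (use e in auto)
    then show ?thesis using i2 by simp
  qed
  show "?h integrable_on {0..1}" using split_int(1)[of s ?h] L2 R2 s by auto
  show "integral {0..1} ?h =
         A * integral {0..s} (\<lambda>x. x powr c * (1-x) powr (b-1) * (s-x) powr g)
         + (A+B) * integral {s..1} (\<lambda>x. x powr c * (1-x) powr (b-1) * (x-s) powr g)"
    using split_int(2)[of s ?h] L2 R2 s by auto
qed

lemma comb_alg: "A*((C*X1 - b*Y1)/s) + D*((C*X2 - b*Y2)/s) = (C*(A*X1+D*X2) - b*(A*Y1+D*Y2))/(s::real)"
  by (cases "s = 0") (simp_all add: field_simps)

lemma moment_der:
  fixes a b g A B s0 :: real and k :: nat
  assumes a: "0 < a" and b: "0 < b" and g: "0 < g" and s0: "0 < s0" "s0 < 1"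
  shows "((\<lambda>s. moment a b g A B k s) has_real_derivative
     ((a+b+g+real k+1) * moment a b g A B k s0
       - b * integral {0..1} (\<lambda>x. x^k * wt a b g A B s0 x / (1-x))) / s0) (at s0)"
proof -
  define c where "c = real k + a"
  have c: "0 < c" unfolding c_def using a by simp
  let ?I1 = "\<lambda>s. integral {0..s} (\<lambda>x. x powr c * (1-x) powr b * (s-x) powr g)"
  let ?I2 = "\<lambda>s. integral {s..1} (\<lambda>x. x powr c * (1-x) powr b * (x-s) powr g)"
  let ?N1 = "integral {0..s0} (\<lambda>x. x powr c * (1-x) powr (b-1) * (s0-x) powr g)"
  let ?N2 = "integral {s0..1} (\<lambda>x. x powr c * (1-x) powr (b-1) * (x-s0) powr g)"
  have D: "((\<lambda>s. A * ?I1 s + (A+B) * ?I2 s) has_real_derivative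
     A * (((c+b+g+1) * ?I1 s0 - b * ?N1) / s0) + (A+B) * (((c+b+g+1) * ?I2 s0 - b * ?N2) / s0)) (at s0)"
    by (intro DERIV_add DERIV_cmult I1_der I2_der c b g s0)
  have D2: "((\<lambda>s. moment a b g A B k s) has_real_derivative
     A * (((c+b+g+1) * ?I1 s0 - b * ?N1) / s0) + (A+B) * (((c+b+g+1) * ?I2 s0 - b * ?N2) / s0)) (at s0)"
    by (rule has_field_derivative_transform_within_open[OF D, of "{0<..<1}"])
       (use s0 moment_facts(2)[OF a b g] in \<open>auto simp: c_def\<close>)
  have "A * (((c+b+g+1) * ?I1 s0 - b * ?N1) / s0) + (A+B) * (((c+b+g+1) * ?I2 s0 - b * ?N2) / s0)
    = ((c+b+g+1) * (A * ?I1 s0 + (A+B) * ?I2 s0) - b * (A * ?N1 + (A+B) * ?N2)) / s0"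
    by (rule comb_alg)
  also have "\<dots> = ((a+b+g+real k+1) * moment a b g A B k s0
       - b * integral {0..1} (\<lambda>x. x^k * wt a b g A B s0 x / (1-x))) / s0"
    using moment_facts(2,4)[OF a b g s0, where k=k and A=A and B=B] unfolding c_def by (simp add: algebra_simps)
  finally show ?thesis using D2 by simp
qed



lemma poly_sumN: "degree (p::real poly) < N \<Longrightarrow> poly p x = (\<Sum>i<N. coeff p i * x ^ i)"
proof -
  assume N: "degree p < N"
  have "poly p x = (\<Sum>i\<le>degree p. coeff p i * x ^ i)" by (rule poly_altdef)
  also have "\<dots> = (\<Sum>i<N. coeff p i * x ^ i)"
    by (rule sum.mono_neutral_right[symmetric]) (use N in \<open>auto simp: coeff_eq_0\<close>)
  finally show ?thesis .
qed

lemma pos_int: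
  fixes f :: "real \<Rightarrow> real" and p :: "real poly"
  assumes lr: "l < r" and cf: "continuous_on {l..r} f" and nn: "\<And>x. x \<in> {l..r} \<Longrightarrow> 0 \<le> f x"
    and ps: "\<And>x. x \<in> {l<..<r} \<Longrightarrow> poly p x \<noteq> 0 \<Longrightarrow> 0 < f x" and p: "p \<noteq> 0"
  shows "0 < integral {l..r} f"
proof (rule ccontr)
  assume "\<not> 0 < integral {l..r} f"
  moreover have i: "f integrable_on {l..r}" by (rule integrable_continuous_interval[OF cf])
  moreover have "0 \<le> integral {l..r} f" by (rule Henstock_Kurzweil_Integration.integral_nonneg[OF i nn])
  ultimately have "integral {l..r} f = 0" by simp
  then have h0: "(f has_integral 0) (cbox l r)" using integrable_integral[OF i] by simp
  have "finite {x. poly p x = 0}" using poly_roots_finite[OF p] .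
  moreover have "infinite {l<..<r}" using lr by simp
  ultimately have "infinite ({l<..<r} - {x. poly p x = 0})" by (rule Diff_infinite_finite)
  then obtain x where x: "x \<in> {l<..<r}" "poly p x \<noteq> 0"
    by (metis (mono_tags, lifting) Diff_iff finite.emptyI mem_Collect_eq set_eq_iff emptyE infinite_imp_nonempty)
  have "f x = 0"
    by (rule has_integral_0_cbox_imp_0[of l r f]) (use cf nn h0 lr x in auto)
  with ps[OF x] show False by simp
qed

locale ctx =
  fixes a b g A B :: real
  assumes a: "0 < a" and b: "0 < b" and g: "0 < g" and A0: "0 \<le> A" and AB: "0 \<le> A + B"
    and nz: "\<not> (A = 0 \<and> A + B = 0)"
begin

definition L where "L s p = integral {0..1} (\<lambda>x. poly p x * wt a b g A B s x)"
definition Nu where "Nu s p = integral {0..1} (\<lambda>x. poly p x * wt a b g A B s x / (1-x))"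
definition nuk where "nuk k s = integral {0..1} (\<lambda>x. x^k * wt a b g A B s x / (1-x))"

lemma L_sum:
  assumes s: "0 < s" "s < 1" and N: "degree p < N"
  shows "L s p = (\<Sum>i<N. coeff p i * moment a b g A B i s)"
    and "(\<lambda>x. poly p x * wt a b g A B s x) integrable_on {0..1}"
proof -
  have e: "poly p x * wt a b g A B s x = (\<Sum>i<N. coeff p i * (x^i * wt a b g A B s x))" for x
    unfolding poly_sumN[OF N] by (simp add: sum_distrib_right mult.assoc)
  have i: "\<And>i. (\<lambda>x. coeff p i * (x^i * wt a b g A B s x)) integrable_on {0..1}"
    by (intro int_cmult moment_facts(1) a b g s)
  show "(\<lambda>x. poly p x * wt a b g A B s x) integrable_on {0..1}"
    unfolding e by (rule Henstock_Kurzweil_Integration.integrable_sum) (use i in auto)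
  show "L s p = (\<Sum>i<N. coeff p i * moment a b g A B i s)"
    unfolding L_def e moment_def
    by (subst Henstock_Kurzweil_Integration.integral_sum) (use i in auto)
qed

lemma Nu_sum:
  assumes s: "0 < s" "s < 1" and N: "degree p < N"
  shows "Nu s p = (\<Sum>i<N. coeff p i * nuk i s)"
proof -
  define F where "F = (\<lambda>i x. coeff p i * (x^i * wt a b g A B s x / (1-x)))"
  have e: "poly p x * wt a b g A B s x / (1-x) = (\<Sum>i<N. F i x)" for x
    unfolding poly_sumN[OF N] F_def by (simp add: sum_distrib_right sum_divide_distrib mult.assoc)
  have i: "\<And>i. F i integrable_on {0..1}"
    unfolding F_def by (intro int_cmult moment_facts(3) a b g s)
  have "Nu s p = (\<Sum>i<N. integral {0..1} (F i))"
    unfolding Nu_def e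
    by (rule Henstock_Kurzweil_Integration.integral_sum) (use i in auto)
  also have "\<dots> = (\<Sum>i<N. coeff p i * nuk i s)"
    unfolding F_def nuk_def by (intro sum.cong refl integral_mult_right)
  finally show ?thesis .
qed

lemma L_add: "0 < s \<Longrightarrow> s < 1 \<Longrightarrow> L s (p + q) = L s p + L s q"
proof -
  assume s: "0 < s" "s < 1"
  define N where "N = Suc (max (degree p) (degree q))"
  have N: "degree p < N" "degree q < N" "degree (p+q) < N"
    unfolding N_def using degree_add_le_max[of p q] by auto
  show ?thesis unfolding L_sum(1)[OF s N(1)] L_sum(1)[OF s N(2)] L_sum(1)[OF s N(3)]
    by (simp add: sum.distrib algebra_simps)
qed

lemma L_smult: "0 < s \<Longrightarrow> s < 1 \<Longrightarrow> L s (Polynomial.smult c p) = c * L s p"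
proof -
  assume s: "0 < s" "s < 1"
  define N where "N = Suc (degree p)"
  have N: "degree p < N" "degree (Polynomial.smult c p) < N" unfolding N_def by auto
  show ?thesis unfolding L_sum(1)[OF s N(1)] L_sum(1)[OF s N(2)]
    by (simp add: sum_distrib_left algebra_simps)
qed

lemma L_zero: "L s 0 = 0" unfolding L_def by simp

lemma L_minus: "0 < s \<Longrightarrow> s < 1 \<Longrightarrow> L s (- p) = - L s p"
  using L_smult[of s "-1" p] by simp

lemma L_diff: "0 < s \<Longrightarrow> s < 1 \<Longrightarrow> L s (p - q) = L s p - L s q"
  using L_add[of s p "-q"] L_minus[of s q] by simp

lemma L_sum_poly: "0 < s \<Longrightarrow> s < 1 \<Longrightarrow> L s (\<Sum>i\<in>I. f i) = (\<Sum>i\<in>I. L s (f i))"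
proof (induction I rule: infinite_finite_induct)
  case (infinite I) then show ?case by (simp add: L_zero)
next
  case empty then show ?case by (simp add: L_zero)
next
  case (insert x F) then show ?case by (simp add: L_add)
qed

lemma L_pos:
  assumes s: "0 < s" "s < 1" and p: "p \<noteq> 0"
  shows "0 < L s (p * p)"
proof -
  let ?f = "\<lambda>x. poly (p*p) x * wt a b g A B s x"
  let ?F1 = "\<lambda>x. (poly p x)^2 * (x powr a * (1-x) powr b * (s-x) powr g)"
  let ?F2 = "\<lambda>x. (poly p x)^2 * (x powr a * (1-x) powr b * (x-s) powr g)"
  have e1: "\<And>x. x \<in> {0..s} \<Longrightarrow> ?f x = A * ?F1 x"
    using wt_left[of _ s a 0 b g A B] a by (simp add: mult_ac power2_eq_square)
  have e2: "\<And>x. x \<in> {s..1} \<Longrightarrow> ?f x = (A+B) * ?F2 x"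
    using wt_right[of s _ a g 0 b A B] a g s by (simp add: mult_ac power2_eq_square)
  have c1: "continuous_on {0..s} ?F1"
    by (intro continuous_on_powr' continuous_intros; use s a b g in force)
  have c2: "continuous_on {s..1} ?F2"
    by (intro continuous_on_powr' continuous_intros; use s a b g in force)
  have i1: "?f integrable_on {0..s}"
    by (rule integrable_eq[OF int_cmult[OF integrable_continuous_interval[OF c1], of A]]) (rule sym[OF e1])
  have i2: "?f integrable_on {s..1}"
    by (rule integrable_eq[OF int_cmult[OF integrable_continuous_interval[OF c2], of "A+B"]]) (rule sym[OF e2])
  have I1: "integral {0..s} ?f = A * integral {0..s} ?F1"
    using integral_cong[of "{0..s}" ?f "\<lambda>x. A * ?F1 x"] e1 by simp
  have I2: "integral {s..1} ?f = (A+B) * integral {s..1} ?F2"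
    using integral_cong[of "{s..1}" ?f "\<lambda>x. (A+B) * ?F2 x"] e2 by simp
  have nn1: "0 \<le> integral {0..s} ?F1"
    by (rule Henstock_Kurzweil_Integration.integral_nonneg[OF integrable_continuous_interval[OF c1]]) auto
  have nn2: "0 \<le> integral {s..1} ?F2"
    by (rule Henstock_Kurzweil_Integration.integral_nonneg[OF integrable_continuous_interval[OF c2]]) auto
  have p1: "0 < integral {0..s} ?F1"
    by (rule pos_int[OF _ c1 _ _ p]) (use s in \<open>auto intro!: mult_pos_pos\<close>)
  have p2: "0 < integral {s..1} ?F2"
    by (rule pos_int[OF _ c2 _ _ p]) (use s in \<open>auto intro!: mult_pos_pos\<close>)
  have "L s (p*p) = A * integral {0..s} ?F1 + (A+B) * integral {s..1} ?F2"
    unfolding L_def using split_int(2)[of s ?f] i1 i2 I1 I2 s by simp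
  moreover have "0 < A * integral {0..s} ?F1 + (A+B) * integral {s..1} ?F2"
  proof (cases "A = 0")
    case True
    then have "0 < A + B" using nz AB by simp
    then show ?thesis using True p2 by simp
  next
    case False
    then have "0 < A" using A0 by simp
    then show ?thesis using p1 nn2 AB by (simp add: add_pos_nonneg)
  qed
  ultimately show ?thesis by simp
qed

definition orth where "orth s n p \<longleftrightarrow> (\<forall>r. degree r < n \<longrightarrow> L s (p * r) = 0)"

lemma int_monom: "integral {0..1} (\<lambda>x. poly p x * x ^ m * wt a b g A B s x) = L s (p * monom 1 m)"
  unfolding L_def by (simp add: poly_monom)

lemma orth_iff:
  assumes s: "0 < s" "s < 1"
  shows "(\<forall>m<n. L s (p * monom 1 m) = 0) \<longleftrightarrow> orth s n p"
proof
  assume "orth s n p" then show "\<forall>m<n. L s (p * monom 1 m) = 0"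
    unfolding orth_def by (auto simp: degree_monom_eq)
next
  assume h: "\<forall>m<n. L s (p * monom 1 m) = 0"
  show "orth s n p" unfolding orth_def
  proof (intro allI impI)
    fix r :: "real poly" assume r: "degree r < n"
    have e: "\<And>i. p * monom (coeff r i) i = Polynomial.smult (coeff r i) (p * monom 1 i)"
      by (metis mult_smult_right smult_monom mult.right_neutral)
    have "p * r = p * (\<Sum>i\<le>degree r. monom (coeff r i) i)" by (simp add: poly_as_sum_of_monoms)
    also have "\<dots> = (\<Sum>i\<le>degree r. Polynomial.smult (coeff r i) (p * monom 1 i))"
      by (simp add: sum_distrib_left e)
    finally have "p * r = (\<Sum>i\<le>degree r. Polynomial.smult (coeff r i) (p * monom 1 i))" .
    then have "L s (p * r) = (\<Sum>i\<le>degree r. coeff r i * L s (p * monom 1 i))"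
      using s by (simp add: L_sum_poly L_smult)
    also have "\<dots> = 0" using h r by (auto intro!: sum.neutral)
    finally show "L s (p * r) = 0" .
  qed
qed

lemma uniq:
  assumes s: "0 < s" "s < 1"
    and p: "degree p = n" "lead_coeff p = 1" "orth s n p"
    and q: "degree q = n" "lead_coeff q = 1" "orth s n q"
  shows "p = q"
proof (rule ccontr)
  assume ne: "p \<noteq> q"
  define r where "r = p - q"
  have r0: "r \<noteq> 0" using ne unfolding r_def by simp
  have "degree r \<le> n" unfolding r_def using p q by (intro degree_diff_le) auto
  moreover have "coeff r n = 0" unfolding r_def using p q by simp
  moreover have "coeff r (degree r) \<noteq> 0" using r0 by simp
  ultimately have dr: "degree r < n" using le_neq_implies_less by fastforce
  have "L s (p * r) = 0" "L s (q * r) = 0" using p(3) q(3) dr unfolding orth_def by auto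
  then have "L s (r * r) = 0" unfolding r_def using s by (simp add: left_diff_distrib L_diff)
  with L_pos[OF s r0] show False by simp
qed

lemma span_zero:
  assumes s: "0 < s" "s < 1"
    and hq: "\<And>i. i \<le> n \<Longrightarrow> L s (q * P i) = 0"
    and hP: "\<And>i. i \<le> n \<Longrightarrow> degree (P i) = i \<and> lead_coeff (P i) = 1"
  shows "degree r \<le> n \<Longrightarrow> L s (q * r) = 0"
proof (induction "degree r" arbitrary: r rule: less_induct)
  case less
  show ?case
  proof (cases "r = 0")
    case True then show ?thesis by (simp add: L_zero)
  next
    case False
    define d where "d = degree r"
    define r' where "r' = r - Polynomial.smult (lead_coeff r) (P d)"
    have Pd: "degree (P d) = d" "lead_coeff (P d) = 1" using hP[of d] less.prems unfolding d_def by auto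
    have "degree r' \<le> d" unfolding r'_def using Pd
      by (intro degree_diff_le) (auto simp: d_def)
    moreover have "coeff r' d = 0" unfolding r'_def using Pd by (simp add: d_def)
    ultimately have "r' = 0 \<or> degree r' < d"
      by (metis le_neq_implies_less leading_coeff_0_iff)
    then have "L s (q * r') = 0"
    proof
      assume "degree r' < d"
      then show ?thesis using less.hyps[of r'] less.prems unfolding d_def by auto
    qed (simp add: L_zero)
    moreover have "q * r = q * r' + Polynomial.smult (lead_coeff r) (q * P d)"
      unfolding r'_def by (simp add: right_diff_distrib mult_smult_right)
    moreover have "L s (q * P d) = 0" using hq less.prems unfolding d_def by auto
    ultimately show ?thesis using s by (simp add: L_add L_smult)
  qed
qed

lemma OP_exists:
  assumes s: "0 < s" "s < 1"
  shows "\<And>j. j \<le> n \<Longrightarrow> degree (OP a b g A B j s) = j \<and> lead_coeff (OP a b g A B j s) = 1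
      \<and> orth s j (OP a b g A B j s)"
proof (induction n)
  have key: "degree (OP a b g A B n s) = n \<and> lead_coeff (OP a b g A B n s) = 1
      \<and> orth s n (OP a b g A B n s)"
    if ex: "degree p = n" "lead_coeff p = 1" "orth s n p" for n p
  proof -
    let ?Q = "\<lambda>p. degree p = n \<and> lead_coeff p = 1 \<and>
      (\<forall>m<n. integral {0..1} (\<lambda>x. poly p x * x ^ m * wt a b g A B s x) = 0)"
    have eqv: "?Q p \<longleftrightarrow> degree p = n \<and> lead_coeff p = 1 \<and> orth s n p" for p
      unfolding int_monom using orth_iff[OF s] by blast
    have "?Q (THE p. ?Q p)"
    proof (rule theI[of ?Q p])
      show "?Q p" using eqv ex by blast
      show "\<And>x. ?Q x \<Longrightarrow> x = p" using eqv ex uniq[OF s] by blast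
    qed
    then show ?thesis unfolding OP_def using eqv by blast
  qed
  {
    case 0
    have "orth s 0 1" unfolding orth_def by simp
    have K: "degree (OP a b g A B 0 s) = 0 \<and> lead_coeff (OP a b g A B 0 s) = 1
      \<and> orth s 0 (OP a b g A B 0 s)" by (rule key[of 1]) (simp_all add: \<open>orth s 0 1\<close>)
    have jz: "j = 0" using 0 by simp
    show ?case unfolding jz by (rule K)
  next
    case (Suc n)
    define P where "P = (\<lambda>j. OP a b g A B j s)"
    have hP: "\<And>i. i \<le> n \<Longrightarrow> degree (P i) = i \<and> lead_coeff (P i) = 1 \<and> orth s i (P i)"
      using Suc.IH unfolding P_def by blast
    have hP1: "coeff (P i) i = 1" if "i \<le> n" for i
    proof -
      have "degree (P i) = i" "coeff (P i) (degree (P i)) = 1" using hP[OF that] by auto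
      then show ?thesis by simp
    qed
    show ?case
    proof (cases "j \<le> n")
      case True then show ?thesis using Suc.IH by blast
    next
      case False
      then have j: "j = Suc n" using Suc.prems by simp
      define c where "c = (\<lambda>j. L s (pCons 0 (P n) * P j) / L s (P j * P j))"
      define S where "S = (\<Sum>j\<le>n. Polynomial.smult (c j) (P j))"
      define q where "q = pCons 0 (P n) - S"
      have cS: "coeff S k = 0" if "n < k" for k
        unfolding S_def coeff_sum using hP that by (auto intro!: sum.neutral simp: coeff_eq_0)
      have Pn1: "coeff (P n) n = 1"
      proof -
        have "degree (P n) = n" "coeff (P n) (degree (P n)) = 1" using hP[of n] by auto
        then show ?thesis by simp
      qed
      have cq1: "coeff q (Suc n) = 1" unfolding q_def using cS Pn1 by simp
      have cq2: "coeff q k = 0" if "Suc n < k" for k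
        unfolding q_def using cS[of k] hP[of n] that by (cases k) (auto simp: coeff_eq_0)
      have dq: "degree q = Suc n"
        using cq1 cq2 by (metis degree_le le_degree le_antisym zero_neq_one leI)
      have lq: "lead_coeff q = 1" using dq cq1 by simp
      have hh: "0 < L s (P i * P i)" if "i \<le> n" for i
      proof -
        have "P i \<noteq> 0" using hP[OF that] by auto
        then show ?thesis by (rule L_pos[OF s])
      qed
      have PP: "L s (P j * P i) = 0" if "i \<le> n" "j \<le> n" "j \<noteq> i" for i j
      proof (cases "j < i")
        case True then show ?thesis using hP[OF that(1)] hP[OF that(2)] unfolding orth_def
          by (metis mult.commute)
      next
        case False then have "i < j" using that by simp
        then show ?thesis using hP[OF that(1)] hP[OF that(2)] unfolding orth_def by metis
      qed
      have qP: "L s (q * P i) = 0" if i: "i \<le> n" for i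
      proof -
        have "q * P i = pCons 0 (P n) * P i - (\<Sum>j\<le>n. Polynomial.smult (c j) (P j * P i))"
          unfolding q_def S_def by (simp add: left_diff_distrib sum_distrib_right mult_smult_left)
        then have "L s (q * P i) = L s (pCons 0 (P n) * P i) - (\<Sum>j\<le>n. c j * L s (P j * P i))"
          using s by (simp add: L_diff L_sum_poly L_smult)
        also have "(\<Sum>j\<le>n. c j * L s (P j * P i)) = c i * L s (P i * P i)"
        proof -
          have "(\<Sum>j\<le>n. c j * L s (P j * P i)) = c i * L s (P i * P i)
              + (\<Sum>j\<in>{..n}-{i}. c j * L s (P j * P i))"
            by (rule sum.remove) (use i in auto)
          also have "(\<Sum>j\<in>{..n}-{i}. c j * L s (P j * P i)) = 0"
            by (rule sum.neutral) (use PP i in auto)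
          finally show ?thesis by simp
        qed
        also have "c i * L s (P i * P i) = L s (pCons 0 (P n) * P i)"
          unfolding c_def using hh[OF i] by simp
        finally show ?thesis by simp
      qed
      have "orth s (Suc n) q" unfolding orth_def
      proof (intro allI impI)
        fix r :: "real poly" assume r: "degree r < Suc n"
        show "L s (q * r) = 0"
          by (rule span_zero[of s n q P r]) (use s qP hP hP1 r in auto)
      qed
      then show ?thesis unfolding j by (rule key[OF dq lq])
    qed
  }
qed

end



context ctx
begin

lemma L_bilin:
  assumes s: "0 < s" "s < 1" and p: "degree p < n" and q: "degree q < n"
  shows "L s (p * q) = (\<Sum>l<n. (\<Sum>k<n. coeff p k * moment a b g A B (k+l) s) * coeff q l)"
proof -
  define F where "F = (\<lambda>l k x. (coeff p k * coeff q l) * (x^(k+l) * wt a b g A B s x))"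
  have iF: "F l k integrable_on {0..1}" for l k
    unfolding F_def by (intro int_cmult moment_facts(1) a b g s)
  have e: "poly (p * q) x * wt a b g A B s x = (\<Sum>l<n. \<Sum>k<n. F l k x)" for x
    unfolding poly_mult poly_sumN[OF p] poly_sumN[OF q] F_def
    by (simp add: sum_distrib_left sum_distrib_right power_add mult_ac)
  have "L s (p * q) = (\<Sum>l<n. integral {0..1} (\<lambda>x. \<Sum>k<n. F l k x))"
    unfolding L_def e
    by (rule Henstock_Kurzweil_Integration.integral_sum)
       (auto intro!: Henstock_Kurzweil_Integration.integrable_sum iF)
  also have "\<dots> = (\<Sum>l<n. \<Sum>k<n. integral {0..1} (F l k))"
    by (intro sum.cong refl Henstock_Kurzweil_Integration.integral_sum) (auto intro: iF)
  also have "\<dots> = (\<Sum>l<n. \<Sum>k<n. (coeff p k * coeff q l) * moment a b g A B (k+l) s)"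
    unfolding F_def moment_def by (intro sum.cong refl integral_mult_right)
  also have "\<dots> = (\<Sum>l<n. (\<Sum>k<n. coeff p k * moment a b g A B (k+l) s) * coeff q l)"
    by (simp add: sum_distrib_left sum_distrib_right mult_ac)
  finally show ?thesis .
qed

lemma OPs:
  assumes s: "0 < s" "s < 1"
  shows "degree (OP a b g A B j s) = j" "coeff (OP a b g A B j s) j = 1" "orth s j (OP a b g A B j s)"
proof -
  have h: "degree (OP a b g A B j s) = j \<and> lead_coeff (OP a b g A B j s) = 1 \<and> orth s j (OP a b g A B j s)"
    using OP_exists[OF s, where n=j and j=j] by blast
  then show "degree (OP a b g A B j s) = j" "orth s j (OP a b g A B j s)" by auto
  have "coeff (OP a b g A B j s) (degree (OP a b g A B j s)) = 1" using h by auto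
  then show "coeff (OP a b g A B j s) j = 1" using h by simp
qed

lemma hn_L: "hn a b g A B n s = L s (OP a b g A B n s * OP a b g A B n s)"
  unfolding hn_def L_def by (simp add: power2_eq_square)

lemma hn_pos: "0 < s \<Longrightarrow> s < 1 \<Longrightarrow> 0 < hn a b g A B n s"
  unfolding hn_L by (rule L_pos) (use OPs(2)[of s n] in auto)

lemma OP_orth2:
  assumes s: "0 < s" "s < 1"
  shows "L s (OP a b g A B i s * OP a b g A B j s) = (if i = j then hn a b g A B i s else 0)"
proof (cases "i = j")
  case True then show ?thesis by (simp add: hn_L)
next
  case False
  show ?thesis
  proof (cases "i < j")
    case True
    then show ?thesis using OPs[OF s, of j] OPs[OF s, of i] False unfolding orth_def
      by (metis mult.commute)
  next
    case F2: False
    then have "j < i" using False by simp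
    then show ?thesis using OPs[OF s, of j] OPs[OF s, of i] False unfolding orth_def by metis
  qed
qed

lemma Dn_prod:
  assumes s: "0 < s" "s < 1"
  shows "Dn a b g A B n s = (\<Prod>j<n. hn a b g A B j s)"
proof -
  define P where "P = (\<lambda>j. OP a b g A B j s)"
  define M where "M = Matrix.mat n n (\<lambda>(i,j). moment a b g A B (i+j) s)"
  define C where "C = Matrix.mat n n (\<lambda>(i,j). coeff (P i) j)"
  define Dg where "Dg = Matrix.mat n n (\<lambda>(i,j). if i = j then hn a b g A B i s else 0)"
  have CM: "C \<in> carrier_mat n n" "M \<in> carrier_mat n n" "transpose_mat C \<in> carrier_mat n n"
    unfolding C_def M_def by auto
  have dP: "degree (P i) = i" "coeff (P i) i = 1" for i unfolding P_def using OPs[OF s] by auto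
  have prod_eq: "C * M * transpose_mat C = Dg"
  proof (rule eq_matI)
    fix i j assume ij: "i < dim_row Dg" "j < dim_col Dg"
    then have ij': "i < n" "j < n" unfolding Dg_def by auto
    have di: "degree (P i) < n" "degree (P j) < n" using dP ij' by auto
    have "(C * M * transpose_mat C) $$ (i,j)
        = (\<Sum>l<n. (\<Sum>k<n. coeff (P i) k * moment a b g A B (k+l) s) * coeff (P j) l)"
      using ij' CM unfolding C_def M_def
      by (simp add: scalar_prod_def atLeast0LessThan)
    also have "\<dots> = L s (P i * P j)" using L_bilin[OF s di] by simp
    also have "\<dots> = Dg $$ (i,j)" unfolding P_def Dg_def using OP_orth2[OF s] ij' by simp
    finally show "(C * M * transpose_mat C) $$ (i,j) = Dg $$ (i,j)" .
  qed (auto simp: Dg_def C_def)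
  have detC: "Determinant.det C = 1"
  proof -
    have "Determinant.det C = prod_list (diag_mat C)"
      by (rule det_lower_triangular[OF _ CM(1)])
         (auto simp: C_def coeff_eq_0 dP)
    also have "\<dots> = 1" unfolding prod_list_diag_prod C_def using dP by simp
    finally show ?thesis .
  qed
  have detD: "Determinant.det Dg = (\<Prod>j<n. hn a b g A B j s)"
  proof -
    have "Determinant.det Dg = prod_list (diag_mat Dg)"
      by (rule det_upper_triangular) (auto simp: Dg_def upper_triangular_def)
    also have "\<dots> = (\<Prod>j<n. hn a b g A B j s)" unfolding prod_list_diag_prod Dg_def
      by (simp add: atLeast0LessThan)
    finally show ?thesis .
  qed
  have "Determinant.det Dg = Determinant.det C * Determinant.det M * Determinant.det (transpose_mat C)"
    unfolding prod_eq[symmetric]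
    by (simp add: det_mult[OF mult_carrier_mat[OF CM(1,2)] CM(3)] det_mult[OF CM(1,2)])
  then have detM: "Determinant.det M = (\<Prod>j<n. hn a b g A B j s)"
    using detC detD det_transpose[OF CM(1)] by simp
  have "Dn a b g A B n s = Determinant.det M"
    unfolding Dn_def Determinant.det_def M_def
    by (auto simp: atLeast0LessThan permutes_in_image intro!: sum.cong prod.cong)
  then show ?thesis using detM by simp
qed

end



lemma coeff_mult_2: "coeff (2 * p) k = 2 * coeff (p :: real poly) k"
  by (metis coeff_add mult_2)

lemma coeff_euler: "coeff (pCons 0 (pderiv p)) k = of_nat k * coeff p k"
  by (cases k) (simp_all add: coeff_pderiv)

lemma degree_euler: "degree p < N \<Longrightarrow> degree (pCons 0 (pderiv p)) < N"
proof -
  assume N: "degree p < N"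
  have "degree (pCons 0 (pderiv p)) \<le> degree p"
    by (rule degree_le) (auto simp: coeff_euler coeff_eq_0)
  then show ?thesis using N by simp
qed

context ctx
begin

definition md where "md k s0 = ((a+b+g+real k+1) * moment a b g A B k s0 - b * nuk k s0) / s0"

lemma mom_der: "0 < s0 \<Longrightarrow> s0 < 1 \<Longrightarrow> ((\<lambda>s. moment a b g A B k s) has_real_derivative md k s0) (at s0)"
  unfolding md_def nuk_def by (rule moment_der[OF a b g])

lemma L_der:
  assumes s0: "0 < s0" "s0 < 1"
  shows "((\<lambda>s. L s p) has_real_derivative
     ((a+b+g+1) * L s0 p + L s0 (pCons 0 (pderiv p)) - b * Nu s0 p) / s0) (at s0)"
proof -
  define N where "N = Suc (degree p)"
  have N: "degree p < N" unfolding N_def by simp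
  have D: "((\<lambda>s. \<Sum>k<N. coeff p k * moment a b g A B k s) has_real_derivative
      (\<Sum>k<N. coeff p k * md k s0)) (at s0)"
    by (intro DERIV_sum DERIV_cmult mom_der s0)
  have D2: "((\<lambda>s. L s p) has_real_derivative (\<Sum>k<N. coeff p k * md k s0)) (at s0)"
    by (rule has_field_derivative_transform_within_open[OF D, of "{0<..<1}"])
       (use s0 L_sum(1)[OF _ _ N] in auto)
  have "(\<Sum>k<N. coeff p k * md k s0) = (\<Sum>k<N. ((a+b+g+1) * (coeff p k * moment a b g A B k s0)
       + (of_nat k * coeff p k) * moment a b g A B k s0 - b * (coeff p k * nuk k s0)) / s0)"
    unfolding md_def by (intro sum.cong refl) (simp add: field_simps)
  also have "\<dots> = ((a+b+g+1) * (\<Sum>k<N. coeff p k * moment a b g A B k s0)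
       + (\<Sum>k<N. (of_nat k * coeff p k) * moment a b g A B k s0) - b * (\<Sum>k<N. coeff p k * nuk k s0)) / s0"
    by (simp add: sum_divide_distrib[symmetric] sum.distrib sum_subtractf sum_distrib_left)
  also have "\<dots> = ((a+b+g+1) * L s0 p + L s0 (pCons 0 (pderiv p)) - b * Nu s0 p) / s0"
    using L_sum(1)[OF s0 N] L_sum(1)[OF s0 degree_euler[OF N]] Nu_sum[OF s0 N]
    by (simp add: coeff_euler)
  finally show ?thesis using D2 by simp
qed

lemma Dn_der:
  assumes s0: "0 < s0" "s0 < 1"
  shows "\<exists>D. ((\<lambda>s. Dn a b g A B n s) has_real_derivative D) (at s0)"
proof -
  have P: "((\<lambda>s. \<Prod>i<n. moment a b g A B (i + p i) s) has_real_derivative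
     (\<Sum>x<n. md (x + p x) s0 * (\<Prod>y\<in>{..<n}-{x}. moment a b g A B (y + p y) s0))) (at s0)" for p
    by (rule has_field_derivative_prod) (rule mom_der[OF s0])
  have "((\<lambda>s. \<Sum>p\<in>{p. p permutes {..<n}}. of_int (sign p) * (\<Prod>i<n. moment a b g A B (i + p i) s))
     has_real_derivative (\<Sum>p\<in>{p. p permutes {..<n}}. of_int (sign p) *
       (\<Sum>x<n. md (x + p x) s0 * (\<Prod>y\<in>{..<n}-{x}. moment a b g A B (y + p y) s0)))) (at s0)"
    by (intro DERIV_sum DERIV_cmult P)
  then show ?thesis unfolding Dn_def by blast
qed

lemma Dn_pos: "0 < s \<Longrightarrow> s < 1 \<Longrightarrow> 0 < Dn a b g A B n s"
  unfolding Dn_prod by (intro prod_pos hn_pos) auto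

lemma hn_der_ex:
  assumes s0: "0 < s0" "s0 < 1"
  shows "\<exists>D. ((\<lambda>s. hn a b g A B n s) has_real_derivative D) (at s0)"
proof -
  obtain D1 where D1: "((\<lambda>s. Dn a b g A B (Suc n) s) has_real_derivative D1) (at s0)"
    using Dn_der[OF s0] by blast
  obtain D2 where D2: "((\<lambda>s. Dn a b g A B n s) has_real_derivative D2) (at s0)"
    using Dn_der[OF s0] by blast
  have DD: "((\<lambda>s. Dn a b g A B (Suc n) s / Dn a b g A B n s) has_real_derivative
      (D1 * Dn a b g A B n s0 - Dn a b g A B (Suc n) s0 * D2) / (Dn a b g A B n s0 * Dn a b g A B n s0)) (at s0)"
    by (rule DERIV_divide[OF D1 D2]) (use Dn_pos[OF s0] in \<open>simp add: less_imp_neq[symmetric]\<close>)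
  have EQ: "\<And>s. s \<in> {0<..<1} \<Longrightarrow> Dn a b g A B (Suc n) s / Dn a b g A B n s = hn a b g A B n s"
  proof -
    fix s :: real assume s: "s \<in> {0<..<1}"
    then have "Dn a b g A B (Suc n) s = Dn a b g A B n s * hn a b g A B n s"
      by (simp add: Dn_prod)
    then show "Dn a b g A B (Suc n) s / Dn a b g A B n s = hn a b g A B n s"
      using Dn_pos[of s n] s by simp
  qed
  have "((\<lambda>s. hn a b g A B n s) has_real_derivative
      (D1 * Dn a b g A B n s0 - Dn a b g A B (Suc n) s0 * D2) / (Dn a b g A B n s0 * Dn a b g A B n s0)) (at s0)"
    by (rule has_field_derivative_transform_within_open[OF DD, of "{0<..<1}"]) (use s0 EQ in auto)
  then show ?thesis by blast
qed

lemma min_prop: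
  assumes s: "0 < s" "s < 1" and Q: "degree Q = n" "coeff Q n = 1"
  shows "hn a b g A B n s \<le> L s (Q * Q)"
proof -
  define P where "P = OP a b g A B n s"
  define r where "r = Q - P"
  have P: "degree P = n" "coeff P n = 1" "orth s n P" unfolding P_def using OPs[OF s] by auto
  have Lr: "L s (P * r) = 0"
  proof (cases "r = 0")
    case True then show ?thesis by (simp add: L_zero)
  next
    case False
    have "degree r \<le> n" unfolding r_def using P Q by (intro degree_diff_le) auto
    moreover have "coeff r n = 0" unfolding r_def using P Q by simp
    moreover have "coeff r (degree r) \<noteq> 0" using False by simp
    ultimately have "degree r < n" using le_neq_implies_less by fastforce
    then show ?thesis using P(3) unfolding orth_def by auto
  qed
  have rr: "0 \<le> L s (r * r)"
    using L_pos[OF s, of r] by (cases "r = 0") (auto simp: L_zero)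
  have eq: "Q * Q = P * P + (P * r + P * r) + r * r" unfolding r_def by (simp add: algebra_simps)
  have "L s (Q * Q) = L s (P * P) + (L s (P * r) + L s (P * r)) + L s (r * r)"
    unfolding eq L_add[OF s] ..
  then show ?thesis using Lr rr unfolding hn_L P_def by simp
qed

lemma euler_id:
  fixes n :: nat and s :: real
  assumes s: "0 < s" "s < 1"
  defines "Q \<equiv> OP a b g A B n s"
  shows "L s (pCons 0 (pderiv (Q * Q))) = 2 * real n * L s (Q * Q)"
proof -
  have Q: "degree Q = n" "coeff Q n = 1" "orth s n Q" unfolding Q_def using OPs[OF s] by auto
  define E where "E = pCons 0 (pderiv Q)"
  define r where "r = E - Polynomial.smult (real n) Q"
  have Lr: "L s (Q * r) = 0"
  proof (cases "r = 0")
    case True then show ?thesis by (simp add: L_zero)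
  next
    case False
    have "degree E \<le> n" unfolding E_def using degree_euler[of Q "Suc n"] Q by simp
    then have "degree r \<le> n" unfolding r_def using Q by (intro degree_diff_le) auto
    moreover have "coeff r n = 0" unfolding r_def E_def using Q by (simp add: coeff_euler)
    moreover have "coeff r (degree r) \<noteq> 0" using False by simp
    ultimately have "degree r < n" using le_neq_implies_less by fastforce
    then show ?thesis using Q(3) unfolding orth_def by auto
  qed
  have "pCons 0 (pderiv (Q * Q)) = Polynomial.smult 2 (Q * E)"
    unfolding E_def pderiv_mult by (rule poly_eqI) (auto simp: coeff_pCons coeff_mult_2 split: nat.split)
  also have "Q * E = Polynomial.smult (real n) (Q * Q) + Q * r"
    unfolding r_def by (simp add: algebra_simps mult_smult_right)
  finally have "pCons 0 (pderiv (Q * Q)) = Polynomial.smult 2 (Polynomial.smult (real n) (Q * Q) + Q * r)" .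
  then show ?thesis using s Lr by (simp add: L_smult L_add)
qed

lemma hn_der:
  assumes t: "0 < t" "t < 1"
  shows "((\<lambda>s. hn a b g A B n s) has_real_derivative
     hn a b g A B n t * (a + b + g + 2 * real n + 1 - Rn a b g A B n t) / t) (at t)"
proof -
  define Q where "Q = OP a b g A B n t"
  have Q: "degree Q = n" "coeff Q n = 1" unfolding Q_def using OPs[OF t] by auto
  obtain Dh where Dh: "((\<lambda>s. hn a b g A B n s) has_real_derivative Dh) (at t)"
    using hn_der_ex[OF t] by blast
  define DF where "DF = ((a+b+g+1) * L t (Q*Q) + L t (pCons 0 (pderiv (Q*Q))) - b * Nu t (Q*Q)) / t"
  have DF: "((\<lambda>s. L s (Q*Q)) has_real_derivative DF) (at t)" unfolding DF_def by (rule L_der[OF t])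
  have "Dh - DF = 0"
  proof (rule DERIV_local_max[OF DERIV_diff[OF Dh DF]])
    show "0 < min t (1-t)" using t by simp
    show "\<forall>y. \<bar>t - y\<bar> < min t (1 - t) \<longrightarrow>
        hn a b g A B n y - L y (Q * Q) \<le> hn a b g A B n t - L t (Q * Q)"
    proof (intro allI impI)
      fix y assume "\<bar>t - y\<bar> < min t (1 - t)"
      then have y: "0 < y" "y < 1" by auto
      have "hn a b g A B n y \<le> L y (Q * Q)" by (rule min_prop[OF y Q])
      moreover have "hn a b g A B n t = L t (Q * Q)" unfolding hn_L Q_def ..
      ultimately show "hn a b g A B n y - L y (Q * Q) \<le> hn a b g A B n t - L t (Q * Q)" by simp
    qed
  qed
  then have "Dh = DF" by simp
  also have "DF = hn a b g A B n t * (a + b + g + 2 * real n + 1 - Rn a b g A B n t) / t"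
  proof -
    have h: "hn a b g A B n t = L t (Q*Q)" unfolding hn_L Q_def ..
    have hp: "0 < hn a b g A B n t" by (rule hn_pos[OF t])
    have R: "Rn a b g A B n t = b / hn a b g A B n t * Nu t (Q*Q)"
      unfolding Rn_def Nu_def Q_def by (simp add: power2_eq_square)
    have e: "L t (pCons 0 (pderiv (Q * Q))) = 2 * real n * L t (Q * Q)"
      unfolding Q_def by (rule euler_id[OF t])
    have k: "hn a b g A B n t * (a + b + g + 2 * real n + 1 - b / hn a b g A B n t * Nu t (Q*Q))
        = (a+b+g+1) * hn a b g A B n t + 2 * real n * hn a b g A B n t - b * Nu t (Q*Q)"
      using hp by (simp add: field_simps)
    show ?thesis unfolding DF_def e R h[symmetric] k by simp
  qed
  finally show ?thesis using Dh by simp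
qed

end



lemma sum_odd: "(\<Sum>j<n. 2 * real j + 1) = real n * real n"
  by (induction n) (auto simp: algebra_simps)

context ctx
begin

lemma lnh_der:
  assumes t: "0 < t" "t < 1"
  shows "((\<lambda>s. ln (hn a b g A B n s)) has_real_derivative
      (a + b + g + 2 * real n + 1 - Rn a b g A B n t) / t) (at t)"
proof -
  have hp: "0 < hn a b g A B n t" by (rule hn_pos[OF t])
  have eq: "(1 / hn a b g A B n t) * (hn a b g A B n t * (a + b + g + 2 * real n + 1 - Rn a b g A B n t) / t)
     = (a + b + g + 2 * real n + 1 - Rn a b g A B n t) / t" using hp by simp
  show ?thesis
    using DERIV_chain2[OF DERIV_ln_divide[OF hp] hn_der[OF t]] unfolding eq .
qed

lemma final:
  assumes t: "0 < t" "t < 1"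
  shows "((\<lambda>s. ln (hn a b g A B n s)) differentiable (at t) \<and>
         t * deriv (\<lambda>s. ln (hn a b g A B n s)) t
           = a + b + g + 2 * real n + 1 - Rn a b g A B n t) \<and>
         (n \<ge> 1 \<longrightarrow> (\<lambda>s. betan a b g A B n s) differentiable (at t) \<and>
         t * deriv (\<lambda>s. betan a b g A B n s) t
           = betan a b g A B n t * (2 - Rn a b g A B n t + Rn a b g A B (n - 1) t)) \<and>
         ((\<lambda>s. ln (Dn a b g A B n s)) differentiable (at t) \<and>
         t * (t - 1) * deriv (\<lambda>s. ln (Dn a b g A B n s)) t
           = real n * (real n + a + b + g) * (t - 1) - (t - 1) * (\<Sum>j<n. Rn a b g A B j t))"
proof (intro conjI impI)
  note D1 = lnh_der[OF t, of n]
  show "(\<lambda>s. ln (hn a b g A B n s)) differentiable (at t)"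
    using D1 DERIV_deriv_iff_real_differentiable DERIV_imp_deriv by metis
  show "t * deriv (\<lambda>s. ln (hn a b g A B n s)) t = a + b + g + 2 * real n + 1 - Rn a b g A B n t"
    using DERIV_imp_deriv[OF D1] t by simp
next
  assume n1: "1 \<le> n"
  define m where "m = n - 1"
  have nm: "real n = real m + 1" unfolding m_def using n1 by simp
  define hN where "hN = hn a b g A B n t"
  define hM where "hM = hn a b g A B m t"
  have hN: "0 < hN" unfolding hN_def by (rule hn_pos[OF t])
  have hM: "0 < hM" unfolding hM_def by (rule hn_pos[OF t])
  have DB: "((\<lambda>s. betan a b g A B n s) has_real_derivative
     ((hN * (a + b + g + 2 * real n + 1 - Rn a b g A B n t) / t) * hM
      - hN * (hM * (a + b + g + 2 * real m + 1 - Rn a b g A B m t) / t)) / (hM * hM)) (at t)"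
    unfolding betan_def m_def[symmetric] hN_def hM_def
    by (rule DERIV_divide[OF hn_der[OF t] hn_der[OF t]]) (use hM in \<open>simp add: hM_def\<close>)
  show "(\<lambda>s. betan a b g A B n s) differentiable (at t)"
    using DB DERIV_deriv_iff_real_differentiable DERIV_imp_deriv by metis
  have bt: "betan a b g A B n t = hN / hM" unfolding betan_def hN_def hM_def m_def ..
  show "t * deriv (\<lambda>s. betan a b g A B n s) t
      = betan a b g A B n t * (2 - Rn a b g A B n t + Rn a b g A B (n - 1) t)"
    unfolding DERIV_imp_deriv[OF DB] bt m_def[symmetric] nm using t hN hM
    by (simp add: field_simps)
next
  define X where "X = (\<lambda>j. (a + b + g + 2 * real j + 1 - Rn a b g A B j t) / t)"
  have DS: "((\<lambda>s. \<Sum>j<n. ln (hn a b g A B j s)) has_real_derivative (\<Sum>j<n. X j)) (at t)"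
    unfolding X_def by (intro DERIV_sum lnh_der[OF t])
  have DL: "((\<lambda>s. ln (Dn a b g A B n s)) has_real_derivative (\<Sum>j<n. X j)) (at t)"
  proof (rule has_field_derivative_transform_within_open[OF DS, of "{0<..<1}"])
    fix s :: real assume s: "s \<in> {0<..<1}"
    then have s': "0 < s" "s < 1" by auto
    have "ln (Dn a b g A B n s) = ln (\<Prod>j<n. hn a b g A B j s)" using Dn_prod[OF s'] by simp
    also have "\<dots> = (\<Sum>j<n. ln (hn a b g A B j s))"
      by (rule ln_prod) (use hn_pos[OF s'] in \<open>auto simp: less_imp_neq[symmetric]\<close>)
    finally show "(\<Sum>j<n. ln (hn a b g A B j s)) = ln (Dn a b g A B n s)" by simp
  qed (use t in auto)
  show "(\<lambda>s. ln (Dn a b g A B n s)) differentiable (at t)"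
    using DL DERIV_deriv_iff_real_differentiable DERIV_imp_deriv by metis
  have "t * (t - 1) * (\<Sum>j<n. X j) = (t - 1) * (\<Sum>j<n. t * X j)"
    by (simp add: sum_distrib_left mult_ac)
  also have "(\<Sum>j<n. t * X j) = (\<Sum>j<n. (a + b + g) + (2 * real j + 1)) - (\<Sum>j<n. Rn a b g A B j t)"
  proof -
    have "(\<Sum>j<n. t * X j) = (\<Sum>j<n. ((a + b + g) + (2 * real j + 1)) - Rn a b g A B j t)"
      unfolding X_def using t by (intro sum.cong refl) simp
    then show ?thesis by (simp add: sum_subtractf)
  qed
  also have "(\<Sum>j<n. (a + b + g) + (2 * real j + 1)) = real n * (a+b+g) + real n * real n"
    using sum_odd[of n] by (simp add: sum.distrib distrib_left)
  finally show "t * (t - 1) * deriv (\<lambda>s. ln (Dn a b g A B n s)) t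
      = real n * (real n + a + b + g) * (t - 1) - (t - 1) * (\<Sum>j<n. Rn a b g A B j t)"
    unfolding DERIV_imp_deriv[OF DL] by (simp add: algebra_simps)
qed

end

theorem mainTheorem6:
  fixes a b g A B t :: real and n :: nat
  assumes "a > 0" "b > 0" "g > 0"
    and "A \<ge> 0" "A + B \<ge> 0" "\<not> (A = 0 \<and> A + B = 0)"
    and "0 < t" "t < 1"
  shows "((\<lambda>s. ln (hn a b g A B n s)) differentiable (at t) \<and>
         t * deriv (\<lambda>s. ln (hn a b g A B n s)) t
           = a + b + g + 2 * real n + 1 - Rn a b g A B n t) \<and>
         (n \<ge> 1 \<longrightarrow> (\<lambda>s. betan a b g A B n s) differentiable (at t) \<and>
         t * deriv (\<lambda>s. betan a b g A B n s) t
           = betan a b g A B n t * (2 - Rn a b g A B n t + Rn a b g A B (n - 1) t)) \<and>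
         ((\<lambda>s. ln (Dn a b g A B n s)) differentiable (at t) \<and>
         t * (t - 1) * deriv (\<lambda>s. ln (Dn a b g A B n s)) t
           = real n * (real n + a + b + g) * (t - 1) - (t - 1) * (\<Sum>j<n. Rn a b g A B j t))"
proof -
  interpret ctx a b g A B by unfold_locales (use assms in auto)
  show ?thesis by (rule final) (use assms in auto)
qed

end
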